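(* Let $X,Y\subset\mathbb{Z}^d$ be nonempty finite sets. Then there exists $\tau\in\mathbb{Z}^d$ such that there is exactly one pair $(x,y)$ with $x\in X$, $y\in Y+\tau$ and $|x-y|=1$.
   Context: $|\cdot|$ is the Euclidean norm; $Y+\tau=\{y+\tau:y\in Y\}$. *)

theory Defs
  imports "HOL-Analysis.Analysis"
begin

definition int_lattice :: "(real ^ 'd) set" where
  "int_lattice = {x. \<forall>i. x $ i \<in> \<int>}"

end

theory Submission
  imports Defs
begin

lemma int_sq_ge1:
  fixes a :: real assumes "a \<in> \<int>" "a \<noteq> 0" shows "a * a \<ge> 1"
proof -
  obtain n where n: "a = of_int n" using assms(1) Ints_cases by blast
  then have "n \<noteq> 0" using assms by auto
  then have "n * n \<ge> 1" by (smt (verit) mult_le_cancel_left1 zero_less_mult_iff)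
  then show ?thesis unfolding n by (metis of_int_1_le_iff of_int_mult)
qed

lemma int_unit:
  fixes w :: "real^'d"
  assumes "\<forall>k. w$k \<in> \<int>" "norm w = 1"
  shows "\<exists>j \<sigma>. (\<sigma> = 1 \<or> \<sigma> = -1) \<and> w = \<sigma> *\<^sub>R axis j 1"
proof -
  have S: "(\<Sum>k\<in>UNIV. w$k * w$k) = 1"
    using assms(2) by (metis inner_vec_def inner_real_def norm_eq_1)
  have "w \<noteq> 0" using assms(2) by auto
  then obtain j where j: "w$j \<noteq> 0" by (metis vec_eq_iff zero_index)
  have ge: "w$j * w$j \<ge> 1" using int_sq_ge1 assms(1) j by blast
  have split: "(\<Sum>k\<in>UNIV. w$k * w$k) = w$j * w$j + (\<Sum>k\<in>UNIV-{j}. w$k * w$k)"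
    by (simp add: sum.remove)
  have nn: "(\<Sum>k\<in>UNIV-{j}. w$k * w$k) \<ge> 0" by (simp add: sum_nonneg)
  have r: "(\<Sum>k\<in>UNIV-{j}. w$k * w$k) = 0" and wj: "w$j * w$j = 1"
    using S split nn ge by linarith+
  have z: "\<And>k. k \<noteq> j \<Longrightarrow> w$k = 0"
  proof -
    fix k assume "k \<noteq> j"
    then have "w$k * w$k = 0" using r sum_nonneg_eq_0_iff[of "UNIV-{j}" "\<lambda>k. w$k * w$k"]
      by auto
    then show "w$k = 0" by simp
  qed
  have "w$j = 1 \<or> w$j = -1" using wj
    by (metis mult_cancel_left1 mult_minus_left square_eq_1_iff)
  moreover have "w = (w$j) *\<^sub>R axis j 1"
    using z by (auto simp: vec_eq_iff axis_def)
  ultimately show ?thesis by blast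
qed

lemma norm_sq_add: "norm (a + b :: real^'d)^2 = norm a ^2 + 2 * (a \<bullet> b) + norm b ^2"
  by (simp add: power2_norm_eq_inner inner_add_left inner_add_right inner_commute)

theorem lemma3p4:
  fixes X Y :: "(real ^ 'd) set"
  assumes "finite X" "finite Y" "X \<noteq> {}" "Y \<noteq> {}"
    and "X \<subseteq> int_lattice" "Y \<subseteq> int_lattice"
  shows "\<exists>\<tau>\<in>int_lattice. \<exists>!p. p \<in> X \<times> ((\<lambda>y. y + \<tau>) ` Y) \<and> norm (fst p - snd p) = 1"
proof -
  let ?f = "\<lambda>p::(real^'d)\<times>(real^'d). norm (fst p - snd p)"
  have P: "finite (X\<times>Y)" "X\<times>Y \<noteq> {}" using assms by auto
  obtain x0 y0 where x0: "x0\<in>X" and y0: "y0\<in>Y"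
    and mx: "\<And>x y. x\<in>X \<Longrightarrow> y\<in>Y \<Longrightarrow> norm (x-y) \<le> norm (x0-y0)"
  proof -
    have "Max (?f`(X\<times>Y)) \<in> ?f`(X\<times>Y)" using P by (intro Max_in) auto
    then obtain p where p: "p\<in>X\<times>Y" "?f p = Max (?f`(X\<times>Y))" by auto
    have "\<And>x y. x\<in>X \<Longrightarrow> y\<in>Y \<Longrightarrow> norm (x-y) \<le> ?f p"
      unfolding p(2) using P by (intro Max_ge) force+
    then show ?thesis using that[of "fst p" "snd p"] p(1) by auto
  qed
  define d0 where "d0 = x0 - y0"
  obtain i where mi: "\<And>k. \<bar>d0$k\<bar> \<le> \<bar>d0$i\<bar>"
  proof -
    let ?g = "\<lambda>k. \<bar>d0$k\<bar>"
    have "Max (?g`UNIV) \<in> ?g`UNIV" by (intro Max_in) auto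
    then obtain i where i: "?g i = Max (?g`UNIV)" by (metis (no_types, lifting) imageE)
    show ?thesis by (rule that[of i], unfold i, intro Max_ge) auto
  qed
  define s :: real where "s = (if d0$i \<ge> 0 then 1 else -1)"
  have s: "s * d0$i = \<bar>d0$i\<bar>" "s * s = 1" "s = 1 \<or> s = -1" unfolding s_def by auto
  define \<tau> where "\<tau> = d0 + s *\<^sub>R axis i 1"
  have lat: "\<And>v. v \<in> int_lattice \<longleftrightarrow> (\<forall>k. v$k \<in> \<int>)" unfolding int_lattice_def by auto
  have d0Z: "\<forall>k. d0$k \<in> \<int>" using x0 y0 assms(5,6) unfolding d0_def lat int_lattice_def by (auto intro!: Ints_diff)
  have sZ: "s \<in> \<int>" using s(3) by auto
  have tauZ: "\<tau> \<in> int_lattice" unfolding lat \<tau>_def using d0Z sZ by (auto simp: axis_def)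
  have key: "x = x0 \<and> y = y0" if x: "x\<in>X" and y: "y\<in>Y" and n: "norm (x - (y + \<tau>)) = 1" for x y
  proof -
    define w where "w = x - (y + \<tau>)"
    have xZ: "\<forall>k. x$k \<in> \<int>" "\<forall>k. y$k \<in> \<int>" using x y assms(5,6) unfolding int_lattice_def by auto
    have "\<forall>k. w$k \<in> \<int>" unfolding w_def using xZ tauZ unfolding lat by (auto intro!: Ints_diff Ints_add)
    then obtain j \<sigma> where sg: "\<sigma> = 1 \<or> \<sigma> = -1" and w: "w = \<sigma> *\<^sub>R axis j 1"
      using int_unit n unfolding w_def by blast
    define v where "v = s *\<^sub>R axis i 1 + \<sigma> *\<^sub>R axis j (1::real)"
    have xy: "x - y = d0 + v" unfolding v_def using w unfolding w_def \<tau>_def by (simp add: algebra_simps)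
    have eq: "x - y = d0"
    proof (rule ccontr)
      assume ne: "x - y \<noteq> d0"
      have "norm (d0 + v)^2 > norm d0 ^2"
      proof (cases "j = i")
        case True
        then have "\<sigma> = s" using ne xy sg s(3) unfolding v_def by auto
        then have "v = (2 * s) *\<^sub>R axis i 1" using True unfolding v_def by (simp add: scaleR_add_left[symmetric])
        then have "norm (d0 + v)^2 = norm d0^2 + 4 * \<bar>d0$i\<bar> + 4"
          unfolding norm_sq_add using s by (simp add: inner_axis power2_eq_square algebra_simps)
        then show ?thesis by simp
      next
        case False
        have "d0 \<bullet> v = \<bar>d0$i\<bar> + \<sigma> * d0$j" unfolding v_def using s
          by (simp add: inner_add_right inner_axis)
        moreover have "\<sigma> * d0$j \<ge> - \<bar>d0$j\<bar>" using sg by auto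
        moreover have "norm v ^2 = 2" unfolding v_def power2_norm_eq_inner using False s sg
          by (auto simp: inner_add_left inner_add_right inner_axis_axis)
        ultimately have "norm (d0 + v)^2 \<ge> norm d0^2 + 2" unfolding norm_sq_add using mi[of j] by linarith
        then show ?thesis by simp
      qed
      moreover have "norm (x - y) \<le> norm d0" using mx x y unfolding d0_def by auto
      ultimately show False unfolding xy
        by (smt (verit) norm_ge_zero power_mono)
    qed
    show ?thesis
    proof (rule ccontr)
      assume "\<not> ?thesis"
      then have xne: "x \<noteq> x0" using eq d0_def by auto
      define a where "a = x - y0"
      define b where "b = x0 - y"
      have ab: "a + b = 2 *\<^sub>R d0" "a - b = 2 *\<^sub>R (x - x0)" unfolding a_def b_def d0_def
        using eq unfolding d0_def by (auto simp: algebra_simps scaleR_2)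
      have "norm (a+b)^2 + norm (a-b)^2 = 2 * norm a^2 + 2 * norm b^2"
        by (simp add: power2_norm_eq_inner inner_add_left inner_add_right inner_diff_left inner_diff_right inner_commute)
      moreover have "norm (a-b)^2 > 0" using ab xne by simp
      moreover have "norm (a+b)^2 = 4 * norm d0^2" using ab by (simp add: power2_eq_square)
      moreover have "norm a \<le> norm d0" "norm b \<le> norm d0" unfolding a_def b_def d0_def
        using mx x y x0 y0 by auto
      moreover have "norm a ^2 \<le> norm d0^2" "norm b^2 \<le> norm d0^2"
        using calculation(4,5) by (auto intro: power_mono)
      ultimately show False by linarith
    qed
  qed
  show ?thesis
  proof (rule bexI[OF _ tauZ], rule ex1I[of _ "(x0, y0 + \<tau>)"])
    have "x0 - (y0 + \<tau>) = - s *\<^sub>R axis i 1" unfolding \<tau>_def d0_def by (simp add: algebra_simps)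
    then have "norm (x0 - (y0 + \<tau>)) = 1" using s(3) by auto
    then show "(x0, y0 + \<tau>) \<in> X \<times> (\<lambda>y. y + \<tau>) ` Y \<and> norm (fst (x0, y0 + \<tau>) - snd (x0, y0 + \<tau>)) = 1"
      using x0 y0 by auto
  next
    fix p assume "p \<in> X \<times> (\<lambda>y. y + \<tau>) ` Y \<and> norm (fst p - snd p) = 1"
    then obtain x y where "p = (x, y + \<tau>)" "x\<in>X" "y\<in>Y" "norm (x - (y+\<tau>)) = 1" by auto
    then show "p = (x0, y0 + \<tau>)" using key by auto
  qed
qed

end
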